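(* Let $0\le \underline c_{ii}<\overline c_{ii}$, $0\le \underline c_{jj}<\overline c_{jj}$, $\underline c_{ij}<\overline c_{ij}$, $\underline s_{ij}<\overline s_{ij}$ be real numbers and let $\mathcal{D}_{ij}=[\underline c_{ii},\overline c_{ii}]\times[\underline c_{jj},\overline c_{jj}]\times[\underline c_{ij},\overline c_{ij}]\times[\underline s_{ij},\overline s_{ij}]\subset\mathbb{R}^4$, with points written $z=(c_{ii},c_{jj},c_{ij},s_{ij})$. Define $\mathcal{K}^{=}=\{z\in\mathcal{D}_{ij}: c_{ij}^2+s_{ij}^2=c_{ii}c_{jj}\}$, $\mathcal{K}^{\le}=\{z\in\mathcal{D}_{ij}: c_{ij}^2+s_{ij}^2\le c_{ii}c_{jj}\}$ and $G=\{z\in\mathbb{R}^4: c_{ij}^2+s_{ij}^2\ge c_{ii}c_{jj}\}$. Let $V$ be the (finite) set of all points $z$ such that, for some one-dimensional face (edge) $E$ of the hypercube $\mathcal{D}_{ij}$ (i.e. a segment obtained by fixing three of the four coordinates at one of their bounds), $z$ is an extreme point of $\operatorname{conv}(E\cap G)$. Then $$\operatorname{conv}(\mathcal{K}^{=})=\mathcal{K}^{\le}\cap\operatorname{conv}(V)=\Big\{z\in\mathcal{D}_{ij}:\ \exists\lambda\ge 0,\ c_{ij}^2+s_{ij}^2\le c_{ii}c_{jj},\ z=\sum_{k=1}^K\lambda_k z^k,\ \sum_{k=1}^K\lambda_k=1\Big\},$$ where $z^1,\dots,z^K$ is an enumeration of $V$ (so $K\le 32\cdot 2$ is finite). *)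

theory Defs
  imports "HOL-Analysis.Analysis"
begin

type_synonym pt4 = "real \<times> real \<times> real \<times> real"

definition box4 :: "real \<Rightarrow> real \<Rightarrow> real \<Rightarrow> real \<Rightarrow> real \<Rightarrow> real \<Rightarrow> real \<Rightarrow> real \<Rightarrow> pt4 set" where
  "box4 l1 u1 l2 u2 l3 u3 l4 u4 = {l1..u1} \<times> {l2..u2} \<times> {l3..u3} \<times> {l4..u4}"

definition Gset :: "pt4 set" where
  "Gset = {(cii, cjj, cij, sij). cij\<^sup>2 + sij\<^sup>2 \<ge> cii * cjj}"

definition Keq :: "real \<Rightarrow> real \<Rightarrow> real \<Rightarrow> real \<Rightarrow> real \<Rightarrow> real \<Rightarrow> real \<Rightarrow> real \<Rightarrow> pt4 set" where
  "Keq l1 u1 l2 u2 l3 u3 l4 u4 =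
     {z \<in> box4 l1 u1 l2 u2 l3 u3 l4 u4. case z of (cii, cjj, cij, sij) \<Rightarrow> cij\<^sup>2 + sij\<^sup>2 = cii * cjj}"

definition Kle :: "real \<Rightarrow> real \<Rightarrow> real \<Rightarrow> real \<Rightarrow> real \<Rightarrow> real \<Rightarrow> real \<Rightarrow> real \<Rightarrow> pt4 set" where
  "Kle l1 u1 l2 u2 l3 u3 l4 u4 =
     {z \<in> box4 l1 u1 l2 u2 l3 u3 l4 u4. case z of (cii, cjj, cij, sij) \<Rightarrow> cij\<^sup>2 + sij\<^sup>2 \<le> cii * cjj}"

definition edges4 :: "real \<Rightarrow> real \<Rightarrow> real \<Rightarrow> real \<Rightarrow> real \<Rightarrow> real \<Rightarrow> real \<Rightarrow> real \<Rightarrow> pt4 set set" where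
  "edges4 l1 u1 l2 u2 l3 u3 l4 u4 =
     {{l1..u1} \<times> {b} \<times> {c} \<times> {d} | b c d. b \<in> {l2, u2} \<and> c \<in> {l3, u3} \<and> d \<in> {l4, u4}} \<union>
     {{a} \<times> {l2..u2} \<times> {c} \<times> {d} | a c d. a \<in> {l1, u1} \<and> c \<in> {l3, u3} \<and> d \<in> {l4, u4}} \<union>
     {{a} \<times> {b} \<times> {l3..u3} \<times> {d} | a b d. a \<in> {l1, u1} \<and> b \<in> {l2, u2} \<and> d \<in> {l4, u4}} \<union>
     {{a} \<times> {b} \<times> {c} \<times> {l4..u4} | a b c. a \<in> {l1, u1} \<and> b \<in> {l2, u2} \<and> c \<in> {l3, u3}}"

definition Vset :: "real \<Rightarrow> real \<Rightarrow> real \<Rightarrow> real \<Rightarrow> real \<Rightarrow> real \<Rightarrow> real \<Rightarrow> real \<Rightarrow> pt4 set" where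
  "Vset l1 u1 l2 u2 l3 u3 l4 u4 =
     {z. \<exists>E \<in> edges4 l1 u1 l2 u2 l3 u3 l4 u4. z extreme_point_of (convex hull (E \<inter> Gset))}"

end

theory Submission
  imports Defs
begin



definition fq :: "pt4 \<Rightarrow> real" where "fq z = (case z of (a,b,x,y) \<Rightarrow> x\<^sup>2 + y\<^sup>2 - a*b)"

lemma fq_simp[simp]: "fq (a,b,x,y) = x\<^sup>2 + y\<^sup>2 - a*b" by (simp add: fq_def)

lemma fq_alt: "fq z = (fst(snd(snd z)))\<^sup>2 + (snd(snd(snd z)))\<^sup>2 - fst z * fst (snd z)"
  by (cases z) auto

lemma fq_cont: "continuous_on S fq"
  unfolding fq_alt[abs_def] by (intro continuous_intros)

lemma G_fq: "Gset = {z. 0 \<le> fq z}" by (auto simp: Gset_def)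

lemma Keq_fq: "Keq l1 u1 l2 u2 l3 u3 l4 u4 = box4 l1 u1 l2 u2 l3 u3 l4 u4 \<inter> {z. fq z = 0}"
  by (auto simp: Keq_def)

lemma Kle_fq: "Kle l1 u1 l2 u2 l3 u3 l4 u4 = box4 l1 u1 l2 u2 l3 u3 l4 u4 \<inter> {z. fq z \<le> 0}"
  by (auto simp: Kle_def)

lemma closed_G: "closed {z. 0 \<le> fq z}"
  by (rule closed_Collect_le) (auto intro: fq_cont continuous_intros)

lemma box_convex: "convex (box4 l1 u1 l2 u2 l3 u3 l4 u4)"
  unfolding box4_def by (intro convex_Times convex_real_interval)

lemma box_compact: "compact (box4 l1 u1 l2 u2 l3 u3 l4 u4)"
  unfolding box4_def by (intro compact_Times compact_Icc)

lemma soc: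
  fixes a1 b1 a2 b2 x1 y1 x2 y2 u v :: real
  assumes "0\<le>a1" "0\<le>b1" "0\<le>a2" "0\<le>b2" "x1\<^sup>2+y1\<^sup>2 \<le> a1*b1" "x2\<^sup>2+y2\<^sup>2 \<le> a2*b2" "0\<le>u" "0\<le>v"
  shows "(u * x1 + v * x2)\<^sup>2 + (u * y1 + v * y2)\<^sup>2 \<le> (u * a1 + v * a2) * (u * b1 + v * b2)"
proof -
  define P where "P = x1*x2+y1*y2"
  define Q where "Q = a1*b2+a2*b1"
  have e1: "(x1\<^sup>2+y1\<^sup>2)*(x2\<^sup>2+y2\<^sup>2) - P\<^sup>2 = (x1*y2 - x2*y1)\<^sup>2"
    unfolding P_def by (simp add: power2_eq_square algebra_simps)
  have s1: "P\<^sup>2 \<le> (x1\<^sup>2+y1\<^sup>2)*(x2\<^sup>2+y2\<^sup>2)"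
    using e1 zero_le_power2[of "x1*y2 - x2*y1"] by linarith
  have n1: "0 \<le> a1*b1" using assms(1,2) by simp
  have n2: "0 \<le> x2\<^sup>2+y2\<^sup>2" by simp
  have s2: "(x1\<^sup>2+y1\<^sup>2)*(x2\<^sup>2+y2\<^sup>2) \<le> (a1*b1)*(a2*b2)"
    by (rule mult_mono[OF assms(5) assms(6) n1 n2])
  have e2: "Q\<^sup>2 - 4*((a1*b1)*(a2*b2)) = (a1*b2-a2*b1)\<^sup>2"
    unfolding Q_def by (simp add: power2_eq_square algebra_simps)
  have s3: "4*((a1*b1)*(a2*b2)) \<le> Q\<^sup>2"
    using e2 zero_le_power2[of "a1*b2-a2*b1"] by linarith
  have "(2*P)\<^sup>2 = 4 * P\<^sup>2" by (simp add: power2_eq_square)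
  then have "(2*P)\<^sup>2 \<le> Q\<^sup>2" using s1 s2 s3 by linarith
  moreover have "0 \<le> Q" unfolding Q_def using assms(1-4) by simp
  ultimately have PQ: "2*P \<le> Q" by (rule power2_le_imp_le)
  have uv: "0 \<le> u * v" using assms(7,8) by simp
  have m1: "u * v * (2*P) \<le> u * v * Q" by (rule mult_left_mono[OF PQ uv])
  have m2: "u\<^sup>2*(x1\<^sup>2+y1\<^sup>2) \<le> u\<^sup>2*(a1*b1)" by (rule mult_left_mono[OF assms(5)]) simp
  have m3: "v\<^sup>2*(x2\<^sup>2+y2\<^sup>2) \<le> v\<^sup>2*(a2*b2)" by (rule mult_left_mono[OF assms(6)]) simp
  have e3: "(u * x1 + v * x2)\<^sup>2 + (u * y1 + v * y2)\<^sup>2 = u\<^sup>2*(x1\<^sup>2+y1\<^sup>2) + v\<^sup>2*(x2\<^sup>2+y2\<^sup>2) + u * v * (2*P)"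
    unfolding P_def by (simp add: power2_eq_square algebra_simps)
  have e4: "(u * a1 + v * a2) * (u * b1 + v * b2) = u\<^sup>2*(a1*b1) + v\<^sup>2*(a2*b2) + u * v * Q"
    unfolding Q_def by (simp add: power2_eq_square algebra_simps)
  show ?thesis unfolding e3 e4 using m1 m2 m3 by linarith
qed

lemma Kle_convex:
  assumes "0 \<le> l1" "0 \<le> l2"
  shows "convex (Kle l1 u1 l2 u2 l3 u3 l4 u4)"
proof (rule convexI)
  fix p q :: pt4 and u v :: real
  assume p: "p \<in> Kle l1 u1 l2 u2 l3 u3 l4 u4" and q: "q \<in> Kle l1 u1 l2 u2 l3 u3 l4 u4"
    and uv: "0 \<le> u" "0 \<le> v" "u + v = 1"
  obtain a1 b1 x1 y1 where pe: "p = (a1,b1,x1,y1)" by (cases p) auto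
  obtain a2 b2 x2 y2 where qe: "q = (a2,b2,x2,y2)" by (cases q) auto
  have box: "u *\<^sub>R p + v *\<^sub>R q \<in> box4 l1 u1 l2 u2 l3 u3 l4 u4"
  proof -
    have "p \<in> box4 l1 u1 l2 u2 l3 u3 l4 u4" "q \<in> box4 l1 u1 l2 u2 l3 u3 l4 u4" using p q by (auto simp: Kle_fq)
    then show ?thesis using uv by (intro convexD[OF box_convex]) auto
  qed
  have "a1 \<ge> 0" "b1 \<ge> 0" "a2 \<ge> 0" "b2 \<ge> 0" "x1\<^sup>2+y1\<^sup>2 \<le> a1*b1" "x2\<^sup>2+y2\<^sup>2 \<le> a2*b2"
    using p q assms by (auto simp: Kle_fq pe qe box4_def)
  from soc[OF this uv(1,2)]
  have "fq (u *\<^sub>R p + v *\<^sub>R q) \<le> 0" by (simp add: pe qe)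
  with box show "u *\<^sub>R p + v *\<^sub>R q \<in> Kle l1 u1 l2 u2 l3 u3 l4 u4" by (simp add: Kle_fq)
qed



lemma dir_exists:
  fixes a b x y :: real
  assumes "0 \<le> l1" "0 \<le> l2"
  assumes two: "(l1<a \<and> a<u1 \<and> l2<b \<and> b<u2) \<or> (l1<a \<and> a<u1 \<and> l3<x \<and> x<u3) \<or>
     (l1<a \<and> a<u1 \<and> l4<y \<and> y<u4) \<or> (l2<b \<and> b<u2 \<and> l3<x \<and> x<u3) \<or>
     (l2<b \<and> b<u2 \<and> l4<y \<and> y<u4) \<or> (l3<x \<and> x<u3 \<and> l4<y \<and> y<u4)"
  and ab: "0 \<le> a" "0 \<le> b"
  shows "\<exists>d1 d2 d3 d4. (d1,d2,d3,d4) \<noteq> (0::pt4) \<and>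
     (d1 \<noteq> 0 \<longrightarrow> l1<a \<and> a<u1) \<and> (d2 \<noteq> 0 \<longrightarrow> l2<b \<and> b<u2) \<and>
     (d3 \<noteq> 0 \<longrightarrow> l3<x \<and> x<u3) \<and> (d4 \<noteq> 0 \<longrightarrow> l4<y \<and> y<u4) \<and>
     (\<forall>t. fq (a,b,x,y) \<le> fq (a+t*d1, b+t*d2, x+t*d3, y+t*d4))"
  using two
proof (elim disjE)
  assume h: "l1<a \<and> a<u1 \<and> l2<b \<and> b<u2"
  have "fq (a+t*a, b+t*(-b), x+t*0, y+t*0) = fq (a,b,x,y) + t\<^sup>2*(a*b)" for t
    by (simp add: power2_eq_square algebra_simps)
  moreover have "t\<^sup>2*(a*b) \<ge> 0" for t using ab by simp
  moreover have "a \<noteq> 0" using h assms by auto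
  ultimately show ?thesis using h
    by (intro exI[of _ a] exI[of _ "-b"] exI[of _ 0] exI[of _ 0]) (auto simp: zero_prod_def)
next
  assume h: "l1<a \<and> a<u1 \<and> l3<x \<and> x<u3"
  show ?thesis
  proof (cases "b = 0")
    case True
    then show ?thesis using h
      by (intro exI[of _ 1] exI[of _ 0] exI[of _ 0] exI[of _ 0]) (auto simp: zero_prod_def)
  next
    case False
    have "fq (a+t*(2*x), b+t*0, x+t*b, y+t*0) = fq (a,b,x,y) + t\<^sup>2*b\<^sup>2" for t
      by (simp add: power2_eq_square algebra_simps)
    then show ?thesis using h False
      by (intro exI[of _ "2*x"] exI[of _ 0] exI[of _ b] exI[of _ 0]) (auto simp: zero_prod_def)
  qed
next
  assume h: "l1<a \<and> a<u1 \<and> l4<y \<and> y<u4"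
  show ?thesis
  proof (cases "b = 0")
    case True
    then show ?thesis using h
      by (intro exI[of _ 1] exI[of _ 0] exI[of _ 0] exI[of _ 0]) (auto simp: zero_prod_def)
  next
    case False
    have "fq (a+t*(2*y), b+t*0, x+t*0, y+t*b) = fq (a,b,x,y) + t\<^sup>2*b\<^sup>2" for t
      by (simp add: power2_eq_square algebra_simps)
    then show ?thesis using h False
      by (intro exI[of _ "2*y"] exI[of _ 0] exI[of _ 0] exI[of _ b]) (auto simp: zero_prod_def)
  qed
next
  assume h: "l2<b \<and> b<u2 \<and> l3<x \<and> x<u3"
  show ?thesis
  proof (cases "a = 0")
    case True
    then show ?thesis using h
      by (intro exI[of _ 0] exI[of _ 1] exI[of _ 0] exI[of _ 0]) (auto simp: zero_prod_def)
  next
    case False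
    have "fq (a+t*0, b+t*(2*x), x+t*a, y+t*0) = fq (a,b,x,y) + t\<^sup>2*a\<^sup>2" for t
      by (simp add: power2_eq_square algebra_simps)
    then show ?thesis using h False
      by (intro exI[of _ 0] exI[of _ "2*x"] exI[of _ a] exI[of _ 0]) (auto simp: zero_prod_def)
  qed
next
  assume h: "l2<b \<and> b<u2 \<and> l4<y \<and> y<u4"
  show ?thesis
  proof (cases "a = 0")
    case True
    then show ?thesis using h
      by (intro exI[of _ 0] exI[of _ 1] exI[of _ 0] exI[of _ 0]) (auto simp: zero_prod_def)
  next
    case False
    have "fq (a+t*0, b+t*(2*y), x+t*0, y+t*a) = fq (a,b,x,y) + t\<^sup>2*a\<^sup>2" for t
      by (simp add: power2_eq_square algebra_simps)
    then show ?thesis using h False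
      by (intro exI[of _ 0] exI[of _ "2*y"] exI[of _ 0] exI[of _ a]) (auto simp: zero_prod_def)
  qed
next
  assume h: "l3<x \<and> x<u3 \<and> l4<y \<and> y<u4"
  show ?thesis
  proof (cases "x = 0 \<and> y = 0")
    case True
    then show ?thesis using h
      by (intro exI[of _ 0] exI[of _ 0] exI[of _ 1] exI[of _ 0]) (auto simp: zero_prod_def)
  next
    case False
    have "fq (a+t*0, b+t*0, x+t*(-y), y+t*x) = fq (a,b,x,y) + t\<^sup>2*(x\<^sup>2+y\<^sup>2)" for t
      by (simp add: power2_eq_square algebra_simps)
    moreover have "t\<^sup>2*(x\<^sup>2+y\<^sup>2) \<ge> 0" for t by simp
    ultimately show ?thesis using h False
      by (intro exI[of _ 0] exI[of _ 0] exI[of _ "-y"] exI[of _ x]) (auto simp: zero_prod_def)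
  qed
qed

lemma coord_eps:
  fixes l c u dd :: real
  assumes "l \<le> c" "c \<le> u" "dd \<noteq> 0 \<longrightarrow> l < c \<and> c < u"
  shows "\<exists>e>0. \<forall>t. \<bar>t\<bar> \<le> e \<longrightarrow> l \<le> c + t*dd \<and> c + t*dd \<le> u"
proof (cases "dd = 0")
  case True then show ?thesis using assms by (intro exI[of _ 1]) auto
next
  case False
  define m where "m = min (c - l) (u - c)"
  have m: "m > 0" using False assms by (auto simp: m_def)
  have *: "\<bar>t*dd\<bar> \<le> m" if "\<bar>t\<bar> \<le> m / \<bar>dd\<bar>" for t
  proof -
    have "\<bar>t*dd\<bar> = \<bar>t\<bar> * \<bar>dd\<bar>" by (simp add: abs_mult)
    also have "\<dots> \<le> (m / \<bar>dd\<bar>) * \<bar>dd\<bar>" using that by (intro mult_right_mono) auto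
    also have "\<dots> = m" using False by simp
    finally show ?thesis .
  qed
  have mle: "m \<le> c - l" "m \<le> u - c" by (auto simp: m_def)
  show ?thesis
  proof (intro exI[of _ "m/\<bar>dd\<bar>"] conjI allI impI)
    show "0 < m/\<bar>dd\<bar>" using m False by simp
    fix t assume "\<bar>t\<bar> \<le> m/\<bar>dd\<bar>"
    then have "\<bar>t*dd\<bar> \<le> m" by (rule *)
    then have "t*dd \<le> m" "-(t*dd) \<le> m" by (auto simp only: abs_le_iff)
    then show "l \<le> c + t*dd" "c + t*dd \<le> u" using mle by linarith+
  qed
qed



lemma not_extreme:
  fixes a b x y :: real
  assumes l: "0 \<le> l1" "0 \<le> l2"
  and p: "(a,b,x,y) \<in> box4 l1 u1 l2 u2 l3 u3 l4 u4" "0 \<le> fq (a,b,x,y)"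
  and two: "(l1<a \<and> a<u1 \<and> l2<b \<and> b<u2) \<or> (l1<a \<and> a<u1 \<and> l3<x \<and> x<u3) \<or>
     (l1<a \<and> a<u1 \<and> l4<y \<and> y<u4) \<or> (l2<b \<and> b<u2 \<and> l3<x \<and> x<u3) \<or>
     (l2<b \<and> b<u2 \<and> l4<y \<and> y<u4) \<or> (l3<x \<and> x<u3 \<and> l4<y \<and> y<u4)"
  shows "\<not> (a,b,x,y) extreme_point_of convex hull (box4 l1 u1 l2 u2 l3 u3 l4 u4 \<inter> {z. 0 \<le> fq z})"
proof
  assume ext: "(a,b,x,y) extreme_point_of convex hull (box4 l1 u1 l2 u2 l3 u3 l4 u4 \<inter> {z. 0 \<le> fq z})"
  have bx: "l1 \<le> a" "a \<le> u1" "l2 \<le> b" "b \<le> u2" "l3 \<le> x" "x \<le> u3" "l4 \<le> y" "y \<le> u4"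
    using p by (auto simp: box4_def)
  have ab: "0 \<le> a" "0 \<le> b" using bx l by auto
  obtain d1 d2 d3 d4 where nz: "(d1,d2,d3,d4) \<noteq> (0::pt4)"
    and s1: "d1 \<noteq> 0 \<longrightarrow> l1<a \<and> a<u1" and s2: "d2 \<noteq> 0 \<longrightarrow> l2<b \<and> b<u2"
    and s3: "d3 \<noteq> 0 \<longrightarrow> l3<x \<and> x<u3" and s4: "d4 \<noteq> 0 \<longrightarrow> l4<y \<and> y<u4"
    and mono: "\<forall>t. fq (a,b,x,y) \<le> fq (a+t*d1, b+t*d2, x+t*d3, y+t*d4)"
    using dir_exists[OF l two ab] by blast
  obtain e1 where e1: "e1 > 0" "\<forall>t. \<bar>t\<bar> \<le> e1 \<longrightarrow> l1 \<le> a + t*d1 \<and> a + t*d1 \<le> u1"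
    using coord_eps[OF bx(1,2) s1] by blast
  obtain e2 where e2: "e2 > 0" "\<forall>t. \<bar>t\<bar> \<le> e2 \<longrightarrow> l2 \<le> b + t*d2 \<and> b + t*d2 \<le> u2"
    using coord_eps[OF bx(3,4) s2] by blast
  obtain e3 where e3: "e3 > 0" "\<forall>t. \<bar>t\<bar> \<le> e3 \<longrightarrow> l3 \<le> x + t*d3 \<and> x + t*d3 \<le> u3"
    using coord_eps[OF bx(5,6) s3] by blast
  obtain e4 where e4: "e4 > 0" "\<forall>t. \<bar>t\<bar> \<le> e4 \<longrightarrow> l4 \<le> y + t*d4 \<and> y + t*d4 \<le> u4"
    using coord_eps[OF bx(7,8) s4] by blast
  define e where "e = min (min e1 e2) (min e3 e4)"
  have e: "e > 0" using e1 e2 e3 e4 by (simp add: e_def)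
  define q where "q t = (a+t*d1, b+t*d2, x+t*d3, y+t*d4)" for t
  have qin: "q t \<in> convex hull (box4 l1 u1 l2 u2 l3 u3 l4 u4 \<inter> {z. 0 \<le> fq z})" if "\<bar>t\<bar> \<le> e" for t
  proof (rule hull_inc)
    have "\<bar>t\<bar> \<le> e1" "\<bar>t\<bar> \<le> e2" "\<bar>t\<bar> \<le> e3" "\<bar>t\<bar> \<le> e4" using that by (auto simp: e_def)
    then have "q t \<in> box4 l1 u1 l2 u2 l3 u3 l4 u4"
      using e1 e2 e3 e4 by (simp add: q_def box4_def)
    moreover have "0 \<le> fq (q t)" using mono p(2) unfolding q_def by (meson order_trans)
    ultimately show "q t \<in> box4 l1 u1 l2 u2 l3 u3 l4 u4 \<inter> {z. 0 \<le> fq z}" by simp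
  qed
  have "q (-e) \<noteq> q e" using nz e by (auto simp: q_def zero_prod_def)
  moreover have "(a,b,x,y) = (1 - 1/2) *\<^sub>R q (-e) + (1/2) *\<^sub>R q e"
    by (simp add: q_def field_simps)
  ultimately have "(a,b,x,y) \<in> open_segment (q (-e)) (q e)"
    unfolding in_segment(2) by (intro conjI exI[of _ "1/2"]) auto
  moreover have "q (-e) \<in> convex hull (box4 l1 u1 l2 u2 l3 u3 l4 u4 \<inter> {z. 0 \<le> fq z})"
    "q e \<in> convex hull (box4 l1 u1 l2 u2 l3 u3 l4 u4 \<inter> {z. 0 \<le> fq z})"
    using qin e by auto
  ultimately show False using ext unfolding extreme_point_of_def by blast
qed



lemma edge_props:
  assumes "l1 \<le> u1" "l2 \<le> u2" "l3 \<le> u3" "l4 \<le> u4"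
    and E: "E \<in> edges4 l1 u1 l2 u2 l3 u3 l4 u4"
  shows "compact E \<and> convex E \<and> E \<subseteq> box4 l1 u1 l2 u2 l3 u3 l4 u4 \<and> (\<exists>h::pt4\<Rightarrow>real. linear h \<and> inj_on h E)"
  using E unfolding edges4_def
proof (elim UnE CollectE exE conjE)
  fix b c d assume h: "E = {l1..u1} \<times> {b} \<times> {c} \<times> {d}" "b \<in> {l2, u2}" "c \<in> {l3, u3}" "d \<in> {l4, u4}"
  have "linear (\<lambda>z::pt4. fst z)" by (intro linearI) auto
  moreover have "inj_on (\<lambda>z::pt4. fst z) E" unfolding h(1) by (auto simp: inj_on_def)
  moreover have "compact E" unfolding h(1) by (intro compact_Times compact_Icc compact_sing)
  moreover have "convex E" unfolding h(1) by (intro convex_Times convex_real_interval convex_singleton)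
  moreover have "E \<subseteq> box4 l1 u1 l2 u2 l3 u3 l4 u4" unfolding h(1) box4_def
    using h(2-4) assms(1-4) by (intro Sigma_mono) auto
  ultimately show ?thesis by (intro conjI exI[of _ "\<lambda>z::pt4. fst z"]) simp_all
next
  fix a c d assume h: "E = {a} \<times> {l2..u2} \<times> {c} \<times> {d}" "a \<in> {l1, u1}" "c \<in> {l3, u3}" "d \<in> {l4, u4}"
  have "linear (\<lambda>z::pt4. fst (snd z))" by (intro linearI) auto
  moreover have "inj_on (\<lambda>z::pt4. fst (snd z)) E" unfolding h(1) by (auto simp: inj_on_def)
  moreover have "compact E" unfolding h(1) by (intro compact_Times compact_Icc compact_sing)
  moreover have "convex E" unfolding h(1) by (intro convex_Times convex_real_interval convex_singleton)
  moreover have "E \<subseteq> box4 l1 u1 l2 u2 l3 u3 l4 u4" unfolding h(1) box4_def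
    using h(2-4) assms(1-4) by (intro Sigma_mono) auto
  ultimately show ?thesis by (intro conjI exI[of _ "\<lambda>z::pt4. fst (snd z)"]) simp_all
next
  fix a b d assume h: "E = {a} \<times> {b} \<times> {l3..u3} \<times> {d}" "a \<in> {l1, u1}" "b \<in> {l2, u2}" "d \<in> {l4, u4}"
  have "linear (\<lambda>z::pt4. fst (snd (snd z)))" by (intro linearI) auto
  moreover have "inj_on (\<lambda>z::pt4. fst (snd (snd z))) E" unfolding h(1) by (auto simp: inj_on_def)
  moreover have "compact E" unfolding h(1) by (intro compact_Times compact_Icc compact_sing)
  moreover have "convex E" unfolding h(1) by (intro convex_Times convex_real_interval convex_singleton)
  moreover have "E \<subseteq> box4 l1 u1 l2 u2 l3 u3 l4 u4" unfolding h(1) box4_def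
    using h(2-4) assms(1-4) by (intro Sigma_mono) auto
  ultimately show ?thesis by (intro conjI exI[of _ "\<lambda>z::pt4. fst (snd (snd z))"]) simp_all
next
  fix a b c assume h: "E = {a} \<times> {b} \<times> {c} \<times> {l4..u4}" "a \<in> {l1, u1}" "b \<in> {l2, u2}" "c \<in> {l3, u3}"
  have "linear (\<lambda>z::pt4. snd (snd (snd z)))" by (intro linearI) auto
  moreover have "inj_on (\<lambda>z::pt4. snd (snd (snd z))) E" unfolding h(1) by (auto simp: inj_on_def)
  moreover have "compact E" unfolding h(1) by (intro compact_Times compact_Icc compact_sing)
  moreover have "convex E" unfolding h(1) by (intro convex_Times convex_real_interval convex_singleton)
  moreover have "E \<subseteq> box4 l1 u1 l2 u2 l3 u3 l4 u4" unfolding h(1) box4_def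
    using h(2-4) assms(1-4) by (intro Sigma_mono) auto
  ultimately show ?thesis by (intro conjI exI[of _ "\<lambda>z::pt4. snd (snd (snd z))"]) simp_all
qed

lemma finite_edges: "finite (edges4 l1 u1 l2 u2 l3 u3 l4 u4)"
proof -
  have f: "finite {F b c d | b c d. b \<in> B \<and> c \<in> C \<and> d \<in> DD}"
    if "finite B" "finite C" "finite DD" for F :: "real \<Rightarrow> real \<Rightarrow> real \<Rightarrow> pt4 set" and B C DD
  proof (rule finite_subset)
    show "{F b c d | b c d. b \<in> B \<and> c \<in> C \<and> d \<in> DD} \<subseteq> (\<lambda>(b,c,d). F b c d) ` (B \<times> C \<times> DD)"
      by auto
    show "finite ((\<lambda>(b,c,d). F b c d) ` (B \<times> C \<times> DD))" using that by auto
  qed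
  show ?thesis unfolding edges4_def by (intro finite_UnI f) auto
qed

lemma in_edge:
  fixes a b x y :: real
  assumes p: "(a,b,x,y) \<in> box4 l1 u1 l2 u2 l3 u3 l4 u4"
  and two: "\<not>((l1<a \<and> a<u1 \<and> l2<b \<and> b<u2) \<or> (l1<a \<and> a<u1 \<and> l3<x \<and> x<u3) \<or>
     (l1<a \<and> a<u1 \<and> l4<y \<and> y<u4) \<or> (l2<b \<and> b<u2 \<and> l3<x \<and> x<u3) \<or>
     (l2<b \<and> b<u2 \<and> l4<y \<and> y<u4) \<or> (l3<x \<and> x<u3 \<and> l4<y \<and> y<u4))"
  shows "\<exists>E \<in> edges4 l1 u1 l2 u2 l3 u3 l4 u4. (a,b,x,y) \<in> E"
proof -
  have bx: "l1 \<le> a" "a \<le> u1" "l2 \<le> b" "b \<le> u2" "l3 \<le> x" "x \<le> u3" "l4 \<le> y" "y \<le> u4"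
    using p by (auto simp: box4_def)
  have c1: "l1<a \<and> a<u1 \<or> a \<in> {l1,u1}" using bx by auto
  have c2: "l2<b \<and> b<u2 \<or> b \<in> {l2,u2}" using bx by auto
  have c3: "l3<x \<and> x<u3 \<or> x \<in> {l3,u3}" using bx by auto
  have c4: "l4<y \<and> y<u4 \<or> y \<in> {l4,u4}" using bx by auto
  have e1: "{l1..u1} \<times> {b} \<times> {x} \<times> {y} \<in> edges4 l1 u1 l2 u2 l3 u3 l4 u4"
    if "b \<in> {l2,u2}" "x \<in> {l3,u3}" "y \<in> {l4,u4}"
    unfolding edges4_def apply (rule UnI1, rule UnI1, rule UnI1) using that by (intro CollectI exI conjI refl) auto
  have e2: "{a} \<times> {l2..u2} \<times> {x} \<times> {y} \<in> edges4 l1 u1 l2 u2 l3 u3 l4 u4"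
    if "a \<in> {l1,u1}" "x \<in> {l3,u3}" "y \<in> {l4,u4}"
    unfolding edges4_def apply (rule UnI1, rule UnI1, rule UnI2) using that by (intro CollectI exI conjI refl) auto
  have e3: "{a} \<times> {b} \<times> {l3..u3} \<times> {y} \<in> edges4 l1 u1 l2 u2 l3 u3 l4 u4"
    if "a \<in> {l1,u1}" "b \<in> {l2,u2}" "y \<in> {l4,u4}"
    unfolding edges4_def apply (rule UnI1, rule UnI2) using that by (intro CollectI exI conjI refl) auto
  have e4: "{a} \<times> {b} \<times> {x} \<times> {l4..u4} \<in> edges4 l1 u1 l2 u2 l3 u3 l4 u4"
    if "a \<in> {l1,u1}" "b \<in> {l2,u2}" "x \<in> {l3,u3}"
    unfolding edges4_def apply (rule UnI2) using that by (intro CollectI exI conjI refl) auto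
  show ?thesis
  proof (cases "l1<a \<and> a<u1")
    case True
    then have "b \<in> {l2,u2}" "x \<in> {l3,u3}" "y \<in> {l4,u4}" using two c2 c3 c4 by auto
    then show ?thesis using e1 bx by (intro bexI[of _ "{l1..u1} \<times> {b} \<times> {x} \<times> {y}"]) auto
  next
    case na: False
    then have a: "a \<in> {l1,u1}" using c1 by auto
    show ?thesis
    proof (cases "l2<b \<and> b<u2")
      case True
      then have "x \<in> {l3,u3}" "y \<in> {l4,u4}" using two c3 c4 by auto
      then show ?thesis using e2[OF a] bx by (intro bexI[of _ "{a} \<times> {l2..u2} \<times> {x} \<times> {y}"]) auto
    next
      case False
      then have b: "b \<in> {l2,u2}" using c2 by auto
      show ?thesis
      proof (cases "l3<x \<and> x<u3")
        case True
        then have "y \<in> {l4,u4}" using two c4 by auto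
        then show ?thesis using e3[OF a b] bx by (intro bexI[of _ "{a} \<times> {b} \<times> {l3..u3} \<times> {y}"]) auto
      next
        case False
        then have "x \<in> {l3,u3}" using c3 by auto
        then show ?thesis using e4[OF a b] bx by (intro bexI[of _ "{a} \<times> {b} \<times> {x} \<times> {l4..u4}"]) auto
      qed
    qed
  qed
qed

lemma subsingleton_finite: "(\<And>x y. x \<in> A \<Longrightarrow> y \<in> A \<Longrightarrow> x = y) \<Longrightarrow> finite A"
  by (metis finite.emptyI finite_insert insertI1 subsetI subset_antisym  equals0I finite_subset)

lemma ext_finite_line:
  fixes C :: "'a::real_vector set" and h :: "'a \<Rightarrow> real"
  assumes cv: "convex C" and lin: "linear h" and inj: "inj_on h C"
  shows "finite {x. x extreme_point_of C}"
proof -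
  have key: False if x: "x extreme_point_of C" and yw: "y \<in> C" "w \<in> C" "h y < h x" "h x < h w" for x y w
  proof -
    have xC: "x \<in> C" using x by (simp add: extreme_point_of_def)
    define s where "s = (h x - h y) / (h w - h y)"
    have s: "0 < s" "s < 1" using yw by (auto simp: s_def field_simps)
    define m where "m = (1 - s) *\<^sub>R y + s *\<^sub>R w"
    have mC: "m \<in> C" unfolding m_def by (rule convexD[OF cv yw(1,2)]) (use s in auto)
    have "h m = (1 - s) * h y + s * h w"
      unfolding m_def by (simp add: linear_add[OF lin] linear_scale[OF lin])
    also have "\<dots> = h y + s * (h w - h y)" by (simp add: algebra_simps)
    also have "s * (h w - h y) = h x - h y" using yw by (simp add: s_def)
    also have "h y + (h x - h y) = h x" by simp
    finally have "m = x" by (rule inj_onD[OF inj _ mC xC])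
    moreover have "y \<noteq> w" using yw by auto
    ultimately have "x \<in> open_segment y w"
      unfolding in_segment(2) m_def using s by (intro conjI exI[of _ s]) auto
    then show False using x yw(1,2) unfolding extreme_point_of_def by blast
  qed
  define A where "A = {x\<in>C. \<forall>y\<in>C. h x \<le> h y}"
  define B where "B = {x\<in>C. \<forall>y\<in>C. h y \<le> h x}"
  have sub: "{x. x extreme_point_of C} \<subseteq> A \<union> B"
  proof
    fix x assume x: "x \<in> {x. x extreme_point_of C}"
    then have xe: "x extreme_point_of C" by simp
    then have xC: "x \<in> C" by (simp add: extreme_point_of_def)
    show "x \<in> A \<union> B"
    proof (rule ccontr)
      assume "x \<notin> A \<union> B"
      then obtain y w where "y \<in> C" "\<not> h x \<le> h y" "w \<in> C" "\<not> h w \<le> h x"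
        using xC unfolding A_def B_def by auto
      then show False using key[OF xe, of y w] by auto
    qed
  qed
  have fA: "finite A"
  proof (rule subsingleton_finite)
    fix p q assume "p \<in> A" "q \<in> A"
    then have "p \<in> C" "q \<in> C" "h p \<le> h q" "h q \<le> h p" unfolding A_def by auto
    then show "p = q" using inj_onD[OF inj] by (metis order_antisym)
  qed
  have fB: "finite B"
  proof (rule subsingleton_finite)
    fix p q assume "p \<in> B" "q \<in> B"
    then have "p \<in> C" "q \<in> C" "h p \<le> h q" "h q \<le> h p" unfolding B_def by auto
    then show "p = q" using inj_onD[OF inj] by (metis order_antisym)
  qed
  show ?thesis using finite_subset[OF sub] fA fB by blast
qed



lemma part_ii:
  fixes D :: "pt4 set"
  assumes D: "convex D" and z: "z \<in> D" "fq z \<le> 0" "z \<in> convex hull (D \<inter> {z. 0 \<le> fq z})"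
  shows "z \<in> convex hull (D \<inter> {z. fq z = 0})"
proof (cases "fq z = 0")
  case True then show ?thesis using z by (intro hull_inc) auto
next
  case False
  then have zneg: "fq z < 0" using z by auto
  obtain S u where S: "finite S" "S \<subseteq> D \<inter> {z. 0 \<le> fq z}" "\<forall>x\<in>S. 0 \<le> u x" "sum u S = 1"
    "(\<Sum>v\<in>S. u v *\<^sub>R v) = z"
    using z(3) unfolding convex_hull_explicit by blast
  have "\<exists>t. 0 < t \<and> t \<le> 1 \<and> fq (z + t *\<^sub>R (g - z)) = 0" if g: "g \<in> S" for g
  proof -
    have "continuous_on {0..1} (\<lambda>t::real. fq (z + t *\<^sub>R (g - z)))"
      by (intro continuous_on_compose2[OF fq_cont[of UNIV]] continuous_intros) auto
    moreover have "fq (z + 0 *\<^sub>R (g - z)) \<le> 0" using zneg by simp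
    moreover have "0 \<le> fq (z + 1 *\<^sub>R (g - z))" using g S(2) by auto
    ultimately obtain t where "0 \<le> t" "t \<le> 1" "fq (z + t *\<^sub>R (g - z)) = 0"
      using IVT'[of "\<lambda>t. fq (z + t *\<^sub>R (g - z))" 0 0 1] by auto
    moreover have "t \<noteq> 0" using calculation zneg by auto
    ultimately show ?thesis by (intro exI[of _ t]) auto
  qed
  then obtain T where T: "\<And>g. g \<in> S \<Longrightarrow> 0 < T g \<and> T g \<le> 1 \<and> fq (z + T g *\<^sub>R (g - z)) = 0"
    by metis
  define H where "H g = z + T g *\<^sub>R (g - z)" for g
  define w where "w g = u g / T g" for g
  define W where "W = sum w S"
  have wu: "u g \<le> w g" if "g \<in> S" for g
  proof -
    have T1: "0 < T g" "T g \<le> 1" using T[OF that] by auto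
    have u0: "0 \<le> u g" using S(3) that by auto
    have "T g * u g \<le> u g" using mult_left_le_one_le[OF u0 _ T1(2)] T1(1) by simp
    then have "u g * T g \<le> u g" by (simp add: mult.commute)
    then show ?thesis unfolding w_def using T1(1) by (simp add: le_divide_eq)
  qed
  have W1: "W \<ge> 1" unfolding W_def using S(4) wu sum_mono by (metis)
  have wT: "w g * T g = u g" if "g \<in> S" for g using T[OF that] by (simp add: w_def)
  have HD: "H g \<in> D \<inter> {z. fq z = 0}" if "g \<in> S" for g
  proof -
    have "H g = (1 - T g) *\<^sub>R z + T g *\<^sub>R g" by (simp add: H_def algebra_simps)
    also have "\<dots> \<in> D" using D z(1) S(2) that T[OF that] by (intro convexD) auto
    finally show ?thesis using T[OF that] by (simp add: H_def)
  qed
  have "(\<Sum>g\<in>S. w g *\<^sub>R H g) = (\<Sum>g\<in>S. w g *\<^sub>R z + u g *\<^sub>R g - u g *\<^sub>R z)"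
  proof (rule sum.cong[OF refl])
    fix g assume g: "g \<in> S"
    have "w g *\<^sub>R H g = w g *\<^sub>R z + (w g * T g) *\<^sub>R (g - z)"
      by (simp add: H_def scaleR_add_right)
    also have "\<dots> = w g *\<^sub>R z + u g *\<^sub>R g - u g *\<^sub>R z" using wT[OF g] by (simp add: scaleR_diff_right)
    finally show "w g *\<^sub>R H g = w g *\<^sub>R z + u g *\<^sub>R g - u g *\<^sub>R z" .
  qed
  also have "\<dots> = W *\<^sub>R z + z - z"
    by (simp add: sum.distrib sum_subtractf W_def scaleR_left.sum[symmetric] S(4,5))
  finally have sumH: "(\<Sum>g\<in>S. w g *\<^sub>R H g) = W *\<^sub>R z" by simp
  have "(\<Sum>g\<in>S. (w g / W) *\<^sub>R H g) = (1/W) *\<^sub>R (\<Sum>g\<in>S. w g *\<^sub>R H g)"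
    by (simp add: scaleR_right.sum)
  also have "\<dots> = z" using W1 by (simp add: sumH)
  finally have zeq: "(\<Sum>g\<in>S. (w g / W) *\<^sub>R H g) = z" .
  have "(\<Sum>g\<in>S. (w g / W) *\<^sub>R H g) \<in> convex hull (D \<inter> {z. fq z = 0})"
  proof (rule convex_sum[OF S(1) convex_convex_hull])
    show "(\<Sum>i\<in>S. w i / W) = 1" using W1 by (simp add: sum_divide_distrib[symmetric] W_def)
    show "0 \<le> w i / W" if "i \<in> S" for i using wu[OF that] S(3) that W1 by auto
    show "H i \<in> convex hull (D \<inter> {z. fq z = 0})" if "i \<in> S" for i using HD[OF that] by (rule hull_inc)
  qed
  then show ?thesis using zeq by simp
qed



lemma conv_V:
  assumes l: "0 \<le> l1" "l1 < u1" "0 \<le> l2" "l2 < u2" "l3 < u3" "l4 < u4"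
  shows "convex hull (Vset l1 u1 l2 u2 l3 u3 l4 u4) =
         convex hull (box4 l1 u1 l2 u2 l3 u3 l4 u4 \<inter> {z. 0 \<le> fq z})"
    (is "convex hull ?V = convex hull ?DG")
proof -
  have lu: "l1 \<le> u1" "l2 \<le> u2" "l3 \<le> u3" "l4 \<le> u4" using l by auto
  show ?thesis
proof
  have "?V \<subseteq> ?DG"
  proof
    fix v assume "v \<in> ?V"
    then obtain E where E: "E \<in> edges4 l1 u1 l2 u2 l3 u3 l4 u4"
      "v extreme_point_of convex hull (E \<inter> Gset)" by (auto simp: Vset_def)
    have "v \<in> E \<inter> Gset" using extreme_point_of_convex_hull[OF E(2)] .
    moreover have "E \<subseteq> box4 l1 u1 l2 u2 l3 u3 l4 u4" using edge_props[OF lu E(1)] by blast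
    ultimately show "v \<in> ?DG" by (auto simp: G_fq)
  qed
  then show "convex hull ?V \<subseteq> convex hull ?DG" by (rule hull_mono)
next
  have cDG: "compact (convex hull ?DG)"
    by (intro compact_convex_hull compact_Int_closed box_compact closed_G)
  have ext: "p \<in> convex hull ?V" if p: "p extreme_point_of convex hull ?DG" for p
  proof -
    obtain a b x y where pe: "p = (a,b,x,y)" by (cases p) auto
    have pDG: "p \<in> ?DG" using extreme_point_of_convex_hull[OF p] .
    have "\<not>((l1<a \<and> a<u1 \<and> l2<b \<and> b<u2) \<or> (l1<a \<and> a<u1 \<and> l3<x \<and> x<u3) \<or>
     (l1<a \<and> a<u1 \<and> l4<y \<and> y<u4) \<or> (l2<b \<and> b<u2 \<and> l3<x \<and> x<u3) \<or>
     (l2<b \<and> b<u2 \<and> l4<y \<and> y<u4) \<or> (l3<x \<and> x<u3 \<and> l4<y \<and> y<u4))"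
    proof
      assume h: "(l1<a \<and> a<u1 \<and> l2<b \<and> b<u2) \<or> (l1<a \<and> a<u1 \<and> l3<x \<and> x<u3) \<or>
     (l1<a \<and> a<u1 \<and> l4<y \<and> y<u4) \<or> (l2<b \<and> b<u2 \<and> l3<x \<and> x<u3) \<or>
     (l2<b \<and> b<u2 \<and> l4<y \<and> y<u4) \<or> (l3<x \<and> x<u3 \<and> l4<y \<and> y<u4)"
      have pb: "(a,b,x,y) \<in> box4 l1 u1 l2 u2 l3 u3 l4 u4" "0 \<le> fq (a,b,x,y)" using pDG unfolding pe by auto
      have "\<not> (a,b,x,y) extreme_point_of convex hull ?DG" by (rule not_extreme[OF l(1) l(3) pb h])
      then show False using p unfolding pe by simp
    qed
    moreover have "(a,b,x,y) \<in> box4 l1 u1 l2 u2 l3 u3 l4 u4" using pDG unfolding pe by auto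
    ultimately obtain E where E: "E \<in> edges4 l1 u1 l2 u2 l3 u3 l4 u4" "p \<in> E"
      using in_edge[of a b x y] unfolding pe by blast
    have EP: "compact E \<and> convex E \<and> E \<subseteq> box4 l1 u1 l2 u2 l3 u3 l4 u4"
      using edge_props[OF lu E(1)] by blast
    have cE: "compact (convex hull (E \<inter> Gset))"
      using EP by (intro compact_convex_hull compact_Int_closed) (auto simp: G_fq closed_G)
    have "p \<in> convex hull (E \<inter> Gset)" using E pDG by (intro hull_inc) (auto simp: G_fq)
    also have "\<dots> = convex hull {x. x extreme_point_of convex hull (E \<inter> Gset)}"
      using Krein_Milman_Minkowski[OF cE convex_convex_hull] .
    also have "\<dots> \<subseteq> convex hull ?V"
      using E(1) by (intro hull_mono) (auto simp: Vset_def)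
    finally show ?thesis .
  qed
  have "convex hull ?DG = convex hull {x. x extreme_point_of convex hull ?DG}"
    using Krein_Milman_Minkowski[OF cDG convex_convex_hull] .
  also have "\<dots> \<subseteq> convex hull ?V"
    using ext by (intro hull_minimal) (auto simp: convex_convex_hull)
  finally show "convex hull ?DG \<subseteq> convex hull ?V" .
qed
qed

lemma finite_V:
  assumes l: "0 \<le> l1" "l1 < u1" "0 \<le> l2" "l2 < u2" "l3 < u3" "l4 < u4"
  shows "finite (Vset l1 u1 l2 u2 l3 u3 l4 u4)"
proof -
  have lu: "l1 \<le> u1" "l2 \<le> u2" "l3 \<le> u3" "l4 \<le> u4" using l by auto
  have "Vset l1 u1 l2 u2 l3 u3 l4 u4 =
     (\<Union>E \<in> edges4 l1 u1 l2 u2 l3 u3 l4 u4. {z. z extreme_point_of convex hull (E \<inter> Gset)})"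
    by (auto simp: Vset_def)
  also have "finite \<dots>"
  proof (intro finite_UN_I finite_edges)
    fix E assume E: "E \<in> edges4 l1 u1 l2 u2 l3 u3 l4 u4"
    have ep: "compact E \<and> convex E \<and> E \<subseteq> box4 l1 u1 l2 u2 l3 u3 l4 u4 \<and> (\<exists>h::pt4\<Rightarrow>real. linear h \<and> inj_on h E)"
      by (rule edge_props[OF lu E])
    then have cvx: "convex E" by blast
    from ep obtain h :: "pt4 \<Rightarrow> real" where h: "linear h" "inj_on h E" by blast
    have "convex hull (E \<inter> Gset) \<subseteq> E" using cvx by (intro hull_minimal) auto
    then have "inj_on h (convex hull (E \<inter> Gset))" using h(2) by (rule inj_on_subset[rotated])
    then show "finite {z. z extreme_point_of convex hull (E \<inter> Gset)}"
      using ext_finite_line[OF convex_convex_hull h(1)] by blast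
  qed
  finally show ?thesis .
qed

theorem proposition2:
  fixes l1 u1 l2 u2 l3 u3 l4 u4 :: real
  assumes "0 \<le> l1" "l1 < u1" "0 \<le> l2" "l2 < u2" "l3 < u3" "l4 < u4"
  defines "V \<equiv> Vset l1 u1 l2 u2 l3 u3 l4 u4"
  shows "finite V \<and>
         convex hull (Keq l1 u1 l2 u2 l3 u3 l4 u4) = Kle l1 u1 l2 u2 l3 u3 l4 u4 \<inter> convex hull V \<and>
         Kle l1 u1 l2 u2 l3 u3 l4 u4 \<inter> convex hull V =
           {z \<in> box4 l1 u1 l2 u2 l3 u3 l4 u4.
              \<exists>lam :: pt4 \<Rightarrow> real. (\<forall>v \<in> V. lam v \<ge> 0) \<and>
                 (case z of (cii, cjj, cij, sij) \<Rightarrow> cij\<^sup>2 + sij\<^sup>2 \<le> cii * cjj) \<and>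
                 z = (\<Sum>v \<in> V. lam v *\<^sub>R v) \<and> (\<Sum>v \<in> V. lam v) = 1}"
proof (intro conjI)
  let ?D = "box4 l1 u1 l2 u2 l3 u3 l4 u4"
  show fV: "finite V" unfolding V_def using finite_V assms by blast
  have cV: "convex hull V = convex hull (?D \<inter> {z. 0 \<le> fq z})"
    unfolding V_def using conv_V assms by blast
  show "convex hull (Keq l1 u1 l2 u2 l3 u3 l4 u4) = Kle l1 u1 l2 u2 l3 u3 l4 u4 \<inter> convex hull V"
  proof
    have "convex hull (Keq l1 u1 l2 u2 l3 u3 l4 u4) \<subseteq> Kle l1 u1 l2 u2 l3 u3 l4 u4"
      using Kle_convex[OF assms(1,3)] by (intro hull_minimal) (auto simp: Keq_fq Kle_fq)
    moreover have "convex hull (Keq l1 u1 l2 u2 l3 u3 l4 u4) \<subseteq> convex hull V"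
      unfolding cV Keq_fq by (intro hull_mono) auto
    ultimately show "convex hull (Keq l1 u1 l2 u2 l3 u3 l4 u4) \<subseteq> Kle l1 u1 l2 u2 l3 u3 l4 u4 \<inter> convex hull V"
      by blast
  next
    show "Kle l1 u1 l2 u2 l3 u3 l4 u4 \<inter> convex hull V \<subseteq> convex hull (Keq l1 u1 l2 u2 l3 u3 l4 u4)"
    proof
      fix z assume "z \<in> Kle l1 u1 l2 u2 l3 u3 l4 u4 \<inter> convex hull V"
      then have "z \<in> ?D" "fq z \<le> 0" "z \<in> convex hull (?D \<inter> {z. 0 \<le> fq z})"
        by (auto simp: Kle_fq cV)
      from part_ii[OF box_convex this] show "z \<in> convex hull (Keq l1 u1 l2 u2 l3 u3 l4 u4)"
        by (simp add: Keq_fq)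
    qed
  qed
  show "Kle l1 u1 l2 u2 l3 u3 l4 u4 \<inter> convex hull V =
           {z \<in> ?D.
              \<exists>lam :: pt4 \<Rightarrow> real. (\<forall>v \<in> V. lam v \<ge> 0) \<and>
                 (case z of (cii, cjj, cij, sij) \<Rightarrow> cij\<^sup>2 + sij\<^sup>2 \<le> cii * cjj) \<and>
                 z = (\<Sum>v \<in> V. lam v *\<^sub>R v) \<and> (\<Sum>v \<in> V. lam v) = 1}"
    unfolding convex_hull_finite[OF fV] Kle_def by auto
qed


end
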